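(* A large scale group $G$ has asymptotic dimension $0$ if and only if for every bounded subset $B$ of $G$ the subgroup $\langle B\rangle$ generated by $B$ is bounded.
   Context: A bornology on a set $X$ is a cover of $X$ closed under taking subsets and finite unions. A large scale group is a group $G$ with a bornology $\mathcal B$ that is closed under inverses ($B\in\mathcal B\Rightarrow B^{-1}\in\mathcal B$) and products ($B_1,B_2\in\mathcal B\Rightarrow B_1B_2\in\mathcal B$); its uniformly bounded covers are the covers of $G$ refining $\{gB\}_{g\in G}$ for some $B\in\mathcal B$, and its bounded sets are the members of $\mathcal B$. A large scale space has asymptotic dimension $0$ if every uniformly bounded cover refines a uniformly bounded cover consisting of mutually disjoint sets. *)

theory Defs
  imports "HOL-Algebra.Generated_Groups"
begin

definition bornology :: "'a set \<Rightarrow> 'a set set \<Rightarrow> bool" where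
  "bornology X Bs \<longleftrightarrow>
     Bs \<subseteq> Pow X \<and> Union Bs = X \<and>
     (\<forall>B\<in>Bs. \<forall>C. C \<subseteq> B \<longrightarrow> C \<in> Bs) \<and>
     (\<forall>B1\<in>Bs. \<forall>B2\<in>Bs. B1 \<union> B2 \<in> Bs)"

definition large_scale_group :: "('a, 'b) monoid_scheme \<Rightarrow> 'a set set \<Rightarrow> bool" where
  "large_scale_group G Bs \<longleftrightarrow>
     group G \<and> bornology (carrier G) Bs \<and>
     (\<forall>B\<in>Bs. (\<lambda>x. inv\<^bsub>G\<^esub> x) ` B \<in> Bs) \<and>
     (\<forall>B1\<in>Bs. \<forall>B2\<in>Bs. B1 <#>\<^bsub>G\<^esub> B2 \<in> Bs)"

definition is_cover :: "'a set \<Rightarrow> 'a set set \<Rightarrow> bool" where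
  "is_cover X Us \<longleftrightarrow> Us \<subseteq> Pow X \<and> Union Us = X"

definition refines :: "'a set set \<Rightarrow> 'a set set \<Rightarrow> bool" where
  "refines Us Vs \<longleftrightarrow> (\<forall>U\<in>Us. \<exists>V\<in>Vs. U \<subseteq> V)"

definition unif_bounded_cover :: "('a, 'b) monoid_scheme \<Rightarrow> 'a set set \<Rightarrow> 'a set set \<Rightarrow> bool" where
  "unif_bounded_cover G Bs Us \<longleftrightarrow>
     is_cover (carrier G) Us \<and>
     (\<exists>B\<in>Bs. refines Us ((\<lambda>g. g <#\<^bsub>G\<^esub> B) ` carrier G))"

definition asdim_zero :: "('a, 'b) monoid_scheme \<Rightarrow> 'a set set \<Rightarrow> bool" where
  "asdim_zero G Bs \<longleftrightarrow>
     (\<forall>Us. unif_bounded_cover G Bs Us \<longrightarrow>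
        (\<exists>Vs. unif_bounded_cover G Bs Vs \<and> refines Us Vs \<and>
              (\<forall>V\<in>Vs. \<forall>W\<in>Vs. V \<noteq> W \<longrightarrow> V \<inter> W = {})))"

end

theory Submission
  imports Defs
begin

lemma lsg_dir1:
  fixes G :: "('a, 'b) monoid_scheme" and Bs :: "'a set set"
  assumes lsg: "large_scale_group G Bs" and gen: "\<forall>B\<in>Bs. generate G B \<in> Bs"
  shows "asdim_zero G Bs"
  unfolding asdim_zero_def
proof (intro allI impI)
  fix Us assume ub: "unif_bounded_cover G Bs Us"
  have grp: "group G" using lsg by (simp add: large_scale_group_def)
  have bor: "bornology (carrier G) Bs" using lsg by (simp add: large_scale_group_def)
  from ub obtain B where B: "B \<in> Bs" and ref: "refines Us ((\<lambda>g. g <#\<^bsub>G\<^esub> B) ` carrier G)"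
    unfolding unif_bounded_cover_def by blast
  have Bc: "B \<subseteq> carrier G" using B bor by (auto simp: bornology_def)
  define H where "H = generate G B"
  have HB: "H \<in> Bs" using gen B H_def by simp
  have sub: "subgroup H G" using group.generate_is_subgroup[OF grp Bc] H_def by simp
  have Hc: "H \<subseteq> carrier G" using sub subgroup.subset by blast
  have one: "\<one>\<^bsub>G\<^esub> \<in> H" using H_def generate.one by blast
  have BH: "B \<subseteq> H" unfolding H_def by (blast intro: generate.incl)
  define Vs where "Vs = (\<lambda>g. g <#\<^bsub>G\<^esub> H) ` carrier G"
  have cov: "is_cover (carrier G) Vs"
    unfolding is_cover_def Vs_def
  proof
    show "(\<lambda>g. g <#\<^bsub>G\<^esub> H) ` carrier G \<subseteq> Pow (carrier G)"
      using group.l_coset_subset_G[OF grp Hc] by blast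
    show "\<Union> ((\<lambda>g. g <#\<^bsub>G\<^esub> H) ` carrier G) = carrier G"
    proof
      show "\<Union> ((\<lambda>g. g <#\<^bsub>G\<^esub> H) ` carrier G) \<subseteq> carrier G"
        using group.l_coset_subset_G[OF grp Hc] by blast
      show "carrier G \<subseteq> \<Union> ((\<lambda>g. g <#\<^bsub>G\<^esub> H) ` carrier G)"
      proof
        fix g assume g: "g \<in> carrier G"
        have "g = g \<otimes>\<^bsub>G\<^esub> \<one>\<^bsub>G\<^esub>" using g grp by (simp add: monoid.r_one group.is_monoid)
        hence "g \<in> g <#\<^bsub>G\<^esub> H" using one unfolding l_coset_def by blast
        thus "g \<in> \<Union> ((\<lambda>g. g <#\<^bsub>G\<^esub> H) ` carrier G)" using g by blast
      qed
    qed
  qed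
  have "refines Vs ((\<lambda>g. g <#\<^bsub>G\<^esub> H) ` carrier G)"
    unfolding refines_def Vs_def by blast
  hence "unif_bounded_cover G Bs Vs"
    unfolding unif_bounded_cover_def using cov HB by blast
  moreover have "refines Us Vs"
    unfolding refines_def
  proof
    fix U assume "U \<in> Us"
    then obtain g where g: "g \<in> carrier G" "U \<subseteq> g <#\<^bsub>G\<^esub> B"
      using ref unfolding refines_def by blast
    have "g <#\<^bsub>G\<^esub> B \<subseteq> g <#\<^bsub>G\<^esub> H" using BH unfolding l_coset_def by blast
    thus "\<exists>V\<in>Vs. U \<subseteq> V" using g unfolding Vs_def by blast
  qed
  moreover have "\<forall>V\<in>Vs. \<forall>W\<in>Vs. V \<noteq> W \<longrightarrow> V \<inter> W = {}"
  proof (intro ballI impI)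
    fix V W assume V: "V \<in> Vs" and W: "W \<in> Vs" and ne: "V \<noteq> W"
    from V obtain a where a: "a \<in> carrier G" "V = a <#\<^bsub>G\<^esub> H" unfolding Vs_def by blast
    from W obtain b where b: "b \<in> carrier G" "W = b <#\<^bsub>G\<^esub> H" unfolding Vs_def by blast
    show "V \<inter> W = {}"
    proof (rule ccontr)
      assume "V \<inter> W \<noteq> {}"
      then obtain y where y: "y \<in> V" "y \<in> W" by blast
      have ya: "y \<in> a <#\<^bsub>G\<^esub> H" using y a by blast
      have yb: "y \<in> b <#\<^bsub>G\<^esub> H" using y b by blast
      have "a <#\<^bsub>G\<^esub> H = y <#\<^bsub>G\<^esub> H" by (rule group.l_repr_independence[OF grp ya a(1) sub])
      moreover have "b <#\<^bsub>G\<^esub> H = y <#\<^bsub>G\<^esub> H" by (rule group.l_repr_independence[OF grp yb b(1) sub])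
      ultimately show False using ne a b by simp
    qed
  qed
  ultimately show "\<exists>Vs. unif_bounded_cover G Bs Vs \<and> refines Us Vs \<and>
              (\<forall>V\<in>Vs. \<forall>W\<in>Vs. V \<noteq> W \<longrightarrow> V \<inter> W = {})" by blast
qed

lemma lsg_dir2:
  fixes G :: "('a, 'b) monoid_scheme" and Bs :: "'a set set"
  assumes lsg: "large_scale_group G Bs" and az: "asdim_zero G Bs" and B: "B \<in> Bs"
  shows "generate G B \<in> Bs"
proof -
  have grp: "group G" using lsg by (simp add: large_scale_group_def)
  have bor: "bornology (carrier G) Bs" using lsg by (simp add: large_scale_group_def)
  have invB: "(\<lambda>x. inv\<^bsub>G\<^esub> x) ` B \<in> Bs" using lsg B by (simp add: large_scale_group_def)
  have prodB: "\<And>B1 B2. B1 \<in> Bs \<Longrightarrow> B2 \<in> Bs \<Longrightarrow> B1 <#>\<^bsub>G\<^esub> B2 \<in> Bs"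
    using lsg by (simp add: large_scale_group_def)
  have subc: "\<And>X Y. X \<in> Bs \<Longrightarrow> Y \<subseteq> X \<Longrightarrow> Y \<in> Bs" using bor unfolding bornology_def by blast
  have unc: "\<And>X Y. X \<in> Bs \<Longrightarrow> Y \<in> Bs \<Longrightarrow> X \<union> Y \<in> Bs" using bor unfolding bornology_def by blast
  have singl: "\<And>g. g \<in> carrier G \<Longrightarrow> {g} \<in> Bs"
  proof -
    fix g assume "g \<in> carrier G"
    moreover have "\<Union>Bs = carrier G" using bor by (simp add: bornology_def)
    ultimately obtain X where "X \<in> Bs" "g \<in> X" by blast
    thus "{g} \<in> Bs" using subc by blast
  qed
  have Bc: "B \<subseteq> carrier G" using B bor by (auto simp: bornology_def)
  have onec: "\<one>\<^bsub>G\<^esub> \<in> carrier G" using grp by (simp add: group.is_monoid monoid.one_closed)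
  define B' where "B' = B \<union> (\<lambda>x. inv\<^bsub>G\<^esub> x) ` B \<union> {\<one>\<^bsub>G\<^esub>}"
  have B'b: "B' \<in> Bs" unfolding B'_def using unc B invB singl onec by blast
  have B'c: "B' \<subseteq> carrier G" unfolding B'_def using Bc onec grp by (auto intro: group.inv_closed)
  define Us where "Us = (\<lambda>g. g <#\<^bsub>G\<^esub> B') ` carrier G"
  have mem: "\<And>g. g \<in> carrier G \<Longrightarrow> g \<in> g <#\<^bsub>G\<^esub> B'"
  proof -
    fix g assume g: "g \<in> carrier G"
    have "g = g \<otimes>\<^bsub>G\<^esub> \<one>\<^bsub>G\<^esub>" using g grp by (simp add: monoid.r_one group.is_monoid)
    thus "g \<in> g <#\<^bsub>G\<^esub> B'" unfolding l_coset_def B'_def by blast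
  qed
  have "unif_bounded_cover G Bs Us"
    unfolding unif_bounded_cover_def is_cover_def
  proof (intro conjI)
    show "Us \<subseteq> Pow (carrier G)" unfolding Us_def
      using group.l_coset_subset_G[OF grp B'c] by blast
    show "\<Union> Us = carrier G"
    proof
      show "\<Union> Us \<subseteq> carrier G" unfolding Us_def
        using group.l_coset_subset_G[OF grp B'c] by blast
      show "carrier G \<subseteq> \<Union> Us" unfolding Us_def using mem by blast
    qed
    show "\<exists>B\<in>Bs. refines Us ((\<lambda>g. g <#\<^bsub>G\<^esub> B) ` carrier G)"
      using B'b unfolding Us_def refines_def by blast
  qed
  then obtain Vs where ubV: "unif_bounded_cover G Bs Vs" and ref: "refines Us Vs"
    and disj: "\<forall>V\<in>Vs. \<forall>W\<in>Vs. V \<noteq> W \<longrightarrow> V \<inter> W = {}"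
    using az unfolding asdim_zero_def by blast
  from ubV obtain C where C: "C \<in> Bs" and refC: "refines Vs ((\<lambda>g. g <#\<^bsub>G\<^esub> C) ` carrier G)"
    and covV: "is_cover (carrier G) Vs"
    unfolding unif_bounded_cover_def by blast
  have Vc: "\<And>V. V \<in> Vs \<Longrightarrow> V \<subseteq> carrier G" using covV unfolding is_cover_def by blast
  obtain V0 where V0: "V0 \<in> Vs" "\<one>\<^bsub>G\<^esub> <#\<^bsub>G\<^esub> B' \<subseteq> V0"
    using ref onec unfolding refines_def Us_def by blast
  have oneV0: "\<one>\<^bsub>G\<^esub> \<in> V0" using V0 mem onec by blast
  have step: "\<And>y b. y \<in> V0 \<Longrightarrow> b \<in> B' \<Longrightarrow> y \<otimes>\<^bsub>G\<^esub> b \<in> V0"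
  proof -
    fix y b assume y: "y \<in> V0" and b: "b \<in> B'"
    have yc: "y \<in> carrier G" using y Vc V0 by blast
    obtain V where V: "V \<in> Vs" "y <#\<^bsub>G\<^esub> B' \<subseteq> V"
      using ref yc unfolding refines_def Us_def by blast
    have "y \<in> V" using V mem yc by blast
    hence "V = V0" using disj V V0 y by blast
    moreover have "y \<otimes>\<^bsub>G\<^esub> b \<in> y <#\<^bsub>G\<^esub> B'" using b unfolding l_coset_def by blast
    ultimately show "y \<otimes>\<^bsub>G\<^esub> b \<in> V0" using V by blast
  qed
  define K where "K = {x \<in> carrier G. \<forall>y\<in>V0. y \<otimes>\<^bsub>G\<^esub> x \<in> V0}"
  have Kmul: "\<And>x1 x2. x1 \<in> K \<Longrightarrow> x2 \<in> K \<Longrightarrow> x1 \<otimes>\<^bsub>G\<^esub> x2 \<in> K"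
  proof -
    fix x1 x2 assume k1: "x1 \<in> K" and k2: "x2 \<in> K"
    have c: "x1 \<in> carrier G" "x2 \<in> carrier G" using k1 k2 K_def by auto
    show "x1 \<otimes>\<^bsub>G\<^esub> x2 \<in> K" unfolding K_def
    proof (intro CollectI conjI ballI)
      show "x1 \<otimes>\<^bsub>G\<^esub> x2 \<in> carrier G" using c grp by (simp add: group.is_monoid monoid.m_closed)
      fix y assume y: "y \<in> V0"
      have yc: "y \<in> carrier G" using y Vc V0 by blast
      have "y \<otimes>\<^bsub>G\<^esub> (x1 \<otimes>\<^bsub>G\<^esub> x2) = (y \<otimes>\<^bsub>G\<^esub> x1) \<otimes>\<^bsub>G\<^esub> x2"
        using c yc grp by (simp add: group.is_monoid monoid.m_assoc)
      thus "y \<otimes>\<^bsub>G\<^esub> (x1 \<otimes>\<^bsub>G\<^esub> x2) \<in> V0" using k1 k2 y K_def by auto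
    qed
  qed
  have B1: "B \<subseteq> B'" "\<And>h. h \<in> B \<Longrightarrow> inv\<^bsub>G\<^esub> h \<in> B'" "\<one>\<^bsub>G\<^esub> \<in> B'"
    unfolding B'_def by auto
  have B'K: "B' \<subseteq> K" unfolding K_def using B'c step by blast
  have main: "x \<in> K \<and> inv\<^bsub>G\<^esub> x \<in> K" if "x \<in> generate G B" for x
    using that
  proof (induction rule: generate.induct)
    case one
    have "inv\<^bsub>G\<^esub> \<one>\<^bsub>G\<^esub> = \<one>\<^bsub>G\<^esub>" using grp by (simp add: group.is_monoid monoid.inv_one)
    thus ?case using B'K B1 by auto
  next
    case (incl h)
    have "inv\<^bsub>G\<^esub> h \<in> B'" using incl B1 by blast
    thus ?case using incl B'K B1 by blast
  next
    case (inv h)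
    have "inv\<^bsub>G\<^esub> (inv\<^bsub>G\<^esub> h) = h" using inv Bc grp by (simp add: group.inv_inv subsetD)
    thus ?case using inv B'K B1 by auto
  next
    case (eng h1 h2)
    have c: "h1 \<in> carrier G" "h2 \<in> carrier G" using eng K_def by auto
    have "inv\<^bsub>G\<^esub> (h1 \<otimes>\<^bsub>G\<^esub> h2) = inv\<^bsub>G\<^esub> h2 \<otimes>\<^bsub>G\<^esub> inv\<^bsub>G\<^esub> h1"
      using c grp by (simp add: group.inv_mult_group)
    thus ?case using eng Kmul by auto
  qed
  have genV0: "generate G B \<subseteq> V0"
  proof
    fix x assume "x \<in> generate G B"
    hence "x \<in> K" using main by blast
    hence "\<one>\<^bsub>G\<^esub> \<otimes>\<^bsub>G\<^esub> x \<in> V0" "x \<in> carrier G" using oneV0 K_def by auto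
    thus "x \<in> V0" using grp by (simp add: monoid.l_one group.is_monoid)
  qed
  obtain g where g: "g \<in> carrier G" "V0 \<subseteq> g <#\<^bsub>G\<^esub> C"
    using refC V0 unfolding refines_def by blast
  have "g <#\<^bsub>G\<^esub> C \<in> Bs" using prodB[OF singl[OF g(1)] C] by (simp add: l_coset_eq_set_mult)
  thus ?thesis using subc genV0 g by blast
qed

theorem theorem4p6:
  fixes G :: "('a, 'b) monoid_scheme" and Bs :: "'a set set"
  assumes "large_scale_group G Bs"
  shows "asdim_zero G Bs \<longleftrightarrow> (\<forall>B\<in>Bs. generate G B \<in> Bs)"
  using lsg_dir1[OF assms] lsg_dir2[OF assms] by blast

end
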